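(* Let $p$ be an odd prime and let $q\in\mathbb{C}_p$ satisfy $|1-q|_p<p^{-1/(p-1)}$. Then for every integer $n\ge 0$, $\left|\frac{2}{[2]_q}E_{n,q}\right|_p\le 1$, i.e. $\frac{2}{[2]_q}E_{n,q}$ is a $p$-adic integer.
   Context: $\mathbb{C}_p$ is the completion of an algebraic closure of $\mathbb{Q}_p$, with absolute value $|\cdot|_p$ normalized by $|p|_p=1/p$. For $x\in\mathbb{Z}_p$ put $[x]_q=\frac{1-q^x}{1-q}$ and $[x]_{-q}=\frac{1-(-q)^x}{1+q}$. For a function $f$ on $\mathbb{Z}_p$ the fermionic $p$-adic $q$-integral is $\int_{\mathbb{Z}_p}f(x)\,d\mu_{-q}(x)=\lim_{N\to\infty}\frac{1}{[p^N]_{-q}}\sum_{x=0}^{p^N-1}f(x)(-q)^x$. The $q$-Euler numbers are $E_{n,q}=\int_{\mathbb{Z}_p}[x]_q^n q^{-x}\,d\mu_{-q}(x)$; equivalently $\frac{2}{[2]_q}E_{n,q}=\lim_{N\to\infty}\sum_{x=0}^{p^N-1}(-1)^x[x]_q^n$. *)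

theory Defs
  imports Complex_Main "HOL-Computational_Algebra.Polynomial"
begin

text \<open>The q-number [x]_q = (1 - q^x)/(1 - q), written as the geometric sum
  1 + q + ... + q^(x-1), which agrees with (1-q^x)/(1-q) for q \<noteq> 1 and
  gives the natural value x at q = 1.\<close>
definition q_int :: "'a::comm_ring_1 \<Rightarrow> nat \<Rightarrow> 'a" where
  "q_int q x = (\<Sum>i<x. q ^ i)"

text \<open>An absolute value v on a field K making K a complete, algebraically
  closed, non-archimedean valued field with |p| = 1/p (so the restriction to Q
  is the p-adic absolute value). C_p with its normalized absolute value is such
  a field.\<close>
definition cp_like_abs :: "nat \<Rightarrow> ('a::field_char_0 \<Rightarrow> real) \<Rightarrow> bool" where
  "cp_like_abs p v \<longleftrightarrow>
     (\<forall>x. 0 \<le> v x) \<and> (\<forall>x. v x = 0 \<longleftrightarrow> x = 0) \<and>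
     (\<forall>x y. v (x * y) = v x * v y) \<and>
     (\<forall>x y. v (x + y) \<le> max (v x) (v y)) \<and>
     v (of_nat p) = 1 / real p \<and>
     (\<forall>S :: nat \<Rightarrow> 'a. (\<forall>e>0. \<exists>M. \<forall>m\<ge>M. \<forall>n\<ge>M. v (S m - S n) < e)
         \<longrightarrow> (\<exists>L. (\<lambda>n. v (S n - L)) \<longlonglongrightarrow> 0)) \<and>
     (\<forall>P :: 'a poly. degree P > 0 \<longrightarrow> (\<exists>z. poly P z = 0))"

end

theory Submission
  imports Defs "HOL-Computational_Algebra.Primes"
begin

locale uabs =
  fixes v :: "'a::field_char_0 \<Rightarrow> real"
  assumes nn: "\<And>x. 0 \<le> v x" and z: "\<And>x. v x = 0 \<longleftrightarrow> x = 0"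
    and mult: "\<And>x y. v (x*y) = v x * v y"
    and ultra: "\<And>x y. v (x+y) \<le> max (v x) (v y)"
begin

lemma one: "v 1 = 1"
proof -
  have "v 1 = v 1 * v 1" using mult[of 1 1] by simp
  moreover have "v 1 \<noteq> 0" using z by simp
  ultimately show ?thesis by (metis mult_cancel_left1)
qed

lemma neg1: "v (-1) = 1"
proof -
  have "v (-1) * v (-1) = 1" using mult[of "-1" "-1"] one by simp
  thus ?thesis using nn[of "-1"]
    by (auto simp add: square_eq_1_iff)
qed

lemma vminus: "v (-x) = v x"
  using mult[of "-1" x] neg1 by simp

lemma vdiff: "v (x - y) \<le> max (v x) (v y)"
  using ultra[of x "-y"] vminus[of y] by simp

lemma vpow: "v (x^n) = v x ^ n"
  by (induction n) (auto simp: one mult)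

lemma vzero: "v 0 = 0" using z by simp

lemma vsum_le: "finite (A::'b set) \<Longrightarrow> 0 \<le> B \<Longrightarrow> (\<forall>x\<in>A. v (f x) \<le> B) \<Longrightarrow> v (sum f A) \<le> B"
proof (induction A rule: finite_induct)
  case empty thus ?case by (simp add: vzero)
next
  case (insert a A)
  thus ?case using ultra[of "f a" "sum f A"] by auto
qed

lemma nat_le: "v (of_nat k) \<le> 1"
proof (induction k)
  case 0 thus ?case by (simp add: vzero)
next
  case (Suc k) thus ?case using ultra[of 1 "of_nat k"] one by simp
qed

lemma sign: "v ((-1)^x) = 1" by (simp add: vpow neg1)

end


lemma q_int_Suc: "q_int q (Suc k) = q_int q k + q ^ k"
  by (simp add: q_int_def)

lemma q_int_add: "q_int q (a + m) = q_int q a + q ^ a * q_int q m"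
  by (induction m) (auto simp: q_int_Suc algebra_simps power_add q_int_def)

lemma q_int_mult: "q_int q (k * m) = q_int q m * q_int (q ^ m) k"
proof (induction k)
  case 0 thus ?case by (simp add: q_int_def)
next
  case (Suc k)
  have "q_int q (Suc k * m) = q_int q (k*m) + q^(k*m) * q_int q m"
    by (metis add.commute mult_Suc q_int_add)
  thus ?case using Suc by (simp add: q_int_Suc algebra_simps flip: power_mult)
qed

lemma q_int_gp: "(q - 1) * q_int q m = q ^ m - 1"
  by (induction m) (auto simp: q_int_Suc algebra_simps q_int_def)

lemma q_int_binom: "q_int (1 + t) x = (\<Sum>j<x. of_nat (x choose Suc j) * t ^ j)"
proof (induction x)
  case 0 thus ?case by (simp add: q_int_def)
next
  case (Suc x)
  have b: "(1 + t) ^ x = (\<Sum>j<Suc x. of_nat (x choose j) * t ^ j)"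
    using binomial_ring[of t 1 x] by (simp add: atLeast0AtMost lessThan_Suc_atMost add.commute)
  have "(\<Sum>j<Suc x. of_nat (Suc x choose Suc j) * t ^ j)
      = (\<Sum>j<Suc x. of_nat (x choose j) * t ^ j) + (\<Sum>j<Suc x. of_nat (x choose Suc j) * t ^ j)"
    by (simp add: sum.distrib algebra_simps)
  also have "(\<Sum>j<Suc x. of_nat (x choose Suc j) * t ^ j) = (\<Sum>j<x. of_nat (x choose Suc j) * t ^ j)"
    by (simp add: binomial_eq_0)
  finally show ?case using Suc b by (simp add: q_int_Suc)
qed


lemma sum_split_add: "sum f {..<(k::nat) + m} = sum f {..<k} + (\<Sum>a<m. f (k + a))"
  by (induction m) (auto simp: add.assoc)

lemma sum_reindex_mult: "(\<Sum>x<(m::nat) * k. f x) = (\<Sum>b<k. \<Sum>a<m. f (a + b * m))"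
proof (induction k)
  case 0 thus ?case by simp
next
  case (Suc k)
  have "m * Suc k = m * k + m" by simp
  hence "(\<Sum>x<m * Suc k. f x) = (\<Sum>x<m * k. f x) + (\<Sum>a<m. f (m * k + a))"
    by (simp only: sum_split_add)
  thus ?case using Suc by (simp add: add.commute mult.commute)
qed

lemma alt_sum_odd: "odd p \<Longrightarrow> (\<Sum>b<p. (-1::'a::comm_ring_1) ^ b) = 1"
proof -
  assume "odd p"
  then obtain k where k: "p = Suc (2 * k)" by (metis oddE Suc_eq_plus1)
  have "(\<Sum>b<2*k. (-1::'a) ^ b) = 0" for k::nat by (induction k) auto
  thus ?thesis using k by simp
qed

context uabs
begin

lemma q_le: "v (q - 1) \<le> 1 \<Longrightarrow> v q \<le> 1"
  using ultra[of 1 "q - 1"] one by simp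

lemma q_int_le: "v r \<le> 1 \<Longrightarrow> v (q_int r x) \<le> 1"
  unfolding q_int_def by (rule vsum_le) (auto simp: vpow power_le_one nn)

lemma p_step:
  assumes p: "prime p" and vp: "v (of_nat p) = 1 / real p" and r: "v (r - 1) \<le> s" and s: "s \<le> 1"
  shows "v (q_int r p) \<le> max (1 / real p) (s ^ (p - 1))"
proof -
  define t where "t = r - 1"
  have r1: "r = 1 + t" by (simp add: t_def)
  have vt: "v t \<le> s" "v t \<le> 1" using r s by (auto simp: t_def)
  have p0: "p \<noteq> 0" "p > 1" using p prime_gt_1_nat by auto
  show ?thesis unfolding r1 q_int_binom
  proof (rule vsum_le)
    show "0 \<le> max (1 / real p) (s ^ (p - 1))" by (simp add: le_max_iff_disj)
  next
    show "\<forall>j\<in>{..<p}. v (of_nat (p choose Suc j) * t ^ j) \<le> max (1 / real p) (s ^ (p - 1))"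
    proof
    fix j assume "j \<in> {..<p}"
    hence j: "j < p" by simp
    show "v (of_nat (p choose Suc j) * t ^ j) \<le> max (1 / real p) (s ^ (p - 1))"
    proof (cases "j = p - 1")
      case True
      hence "Suc j = p" using p0 by simp
      hence "v (of_nat (p choose Suc j) * t ^ j) = v t ^ (p - 1)"
        using True by (simp add: mult vpow one)
      also have "\<dots> \<le> s ^ (p - 1)" using vt nn by (simp add: power_mono)
      finally show ?thesis by simp
    next
      case False
      hence "Suc j < p" using j by simp
      hence "p dvd (p choose Suc j)" using dvd_choose_prime[of "Suc j" p] p p0 by auto
      then obtain k where k: "p choose Suc j = p * k" by blast
      have "v (of_nat (p choose Suc j) * t ^ j) = 1 / real p * (v (of_nat k) * v t ^ j)"
        by (simp add: k mult vpow vp)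
      also have "\<dots> \<le> 1 / real p * 1"
        using nat_le[of k] vt nn
        by (intro mult_left_mono) (auto intro!: mult_le_one power_le_one)
      finally show ?thesis by simp
    qed
    qed
  qed simp
qed


lemma pN:
  assumes p: "prime p" and vp: "v (of_nat p) = 1 / real p" and qs: "v (q - 1) \<le> s" and s: "s \<le> 1"
  shows "v (q_int q (p ^ N)) \<le> max (1 / real p) (s ^ (p - 1)) ^ N"
proof (induction N)
  case 0 thus ?case by (simp add: q_int_def one)
next
  case (Suc N)
  define c where "c = max (1 / real p) (s ^ (p - 1))"
  have c0: "0 \<le> c" by (simp add: c_def le_max_iff_disj)
  have vq: "v q \<le> 1" using q_le qs s by simp
  have "v (q ^ p ^ N - 1) = v (q - 1) * v (q_int q (p ^ N))"
    by (simp flip: q_int_gp add: mult)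
  also have "\<dots> \<le> s * 1"
    using qs q_int_le[OF vq] nn by (intro mult_mono) (auto intro: order_trans)
  finally have r: "v (q ^ p ^ N - 1) \<le> s" by simp
  have "q_int q (p ^ Suc N) = q_int q (p ^ N) * q_int (q ^ p ^ N) p"
    by (simp add: q_int_mult)
  hence "v (q_int q (p ^ Suc N)) = v (q_int q (p ^ N)) * v (q_int (q ^ p ^ N) p)"
    by (simp add: mult)
  also have "\<dots> \<le> c ^ N * c"
    using Suc p_step[OF p vp r s] nn c0 by (intro mult_mono) (auto simp: c_def)
  finally show ?case by (simp add: c_def mult.commute)
qed

lemma diff_step:
  assumes p: "prime p" "odd p" and vp: "v (of_nat p) = 1 / real p" and qs: "v (q - 1) \<le> s" and s: "s \<le> 1"
    and S_def: "S = (\<lambda>N. (\<Sum>x<p ^ N. (- 1) ^ x * q_int q x ^ n))"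
  shows "v (S (Suc N) - S N) \<le> max (1 / real p) (s ^ (p - 1)) ^ N"
proof -
  define c where "c = max (1 / real p) (s ^ (p - 1))"
  have c0: "0 \<le> c" by (simp add: c_def le_max_iff_disj)
  define M where "M = p ^ N"
  have oM: "odd M" using p by (simp add: M_def)
  have vq: "v q \<le> 1" using q_le qs s by simp
  have sgnM: "((-1::'a) ^ x) ^ M = (-1) ^ x" for x
    using oM by (metis power_minus_odd power_one power_mult mult.commute)
  have QM: "v (q_int q M) \<le> c ^ N" unfolding M_def c_def by (rule pN[OF p(1) vp qs s])
  have S1: "S (Suc N) = (\<Sum>b<p. \<Sum>a<M. (-1) ^ (a + b * M) * q_int q (a + b * M) ^ n)"
  proof -
    have "p ^ Suc N = M * p" by (simp add: M_def mult.commute)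
    thus ?thesis unfolding S_def by (simp only: sum_reindex_mult)
  qed
  have S0: "S N = (\<Sum>b<p. \<Sum>a<M. (-1) ^ (a + b * M) * q_int q a ^ n)"
  proof -
    have "S N = (\<Sum>b<p. (-1) ^ b) * S N" using alt_sum_odd[OF p(2), where 'a='a] by simp
    also have "\<dots> = (\<Sum>b<p. \<Sum>a<M. (-1) ^ b * ((-1) ^ a * q_int q a ^ n))"
      by (simp add: S_def M_def sum_distrib_left sum_distrib_right sum.swap[of _ "{..<p}"])
    also have "\<dots> = (\<Sum>b<p. \<Sum>a<M. (-1) ^ (a + b * M) * q_int q a ^ n)"
      using oM sgnM by (intro sum.cong refl) (simp add: power_add power_mult mult.commute mult.left_commute)
    finally show ?thesis .
  qed
  have "S (Suc N) - S N = (\<Sum>b<p. \<Sum>a<M. (-1) ^ (a + b * M) * (q_int q (a + b * M) ^ n - q_int q a ^ n))"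
    unfolding S1 S0 by (simp add: sum_subtractf algebra_simps)
  also have "v \<dots> \<le> c ^ N"
  proof (intro vsum_le ballI finite_lessThan zero_le_power c0)
    fix b a assume "b \<in> {..<p}" "a \<in> {..<M}"
    define X where "X = q_int q (a + b * M)"
    define Y where "Y = q_int q a"
    have XY: "X - Y = q ^ a * (q_int q M * q_int (q ^ M) b)"
      using q_int_mult[of q b M] by (simp add: X_def Y_def q_int_add)
    have vX: "v X \<le> 1" "v Y \<le> 1" using q_int_le[OF vq] by (auto simp: X_def Y_def)
    have "v (q ^ a * (q_int q M * q_int (q ^ M) b)) = v q ^ a * (v (q_int q M) * v (q_int (q ^ M) b))"
      by (simp add: mult vpow)
    also have "\<dots> \<le> 1 * (c ^ N * 1)"
      using vq QM q_int_le[of "q ^ M" b] nn c0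
      by (intro mult_mono) (auto simp: vpow power_le_one)
    finally have vd: "v (X - Y) \<le> c ^ N" using XY by simp
    have vs: "v (\<Sum>i<n. Y ^ (n - Suc i) * X ^ i) \<le> 1"
      using vX nn by (intro vsum_le) (auto simp: mult vpow intro!: mult_le_one power_le_one)
    have "v ((-1) ^ (a + b * M) * (X ^ n - Y ^ n)) = v (X - Y) * v (\<Sum>i<n. Y ^ (n - Suc i) * X ^ i)"
      by (simp add: mult sign power_diff_sumr2)
    also have "\<dots> \<le> c ^ N * 1"
      using vd vs nn c0 by (intro mult_mono) auto
    finally show "v ((-1) ^ (a + b * M) * (q_int q (a + b * M) ^ n - q_int q a ^ n)) \<le> c ^ N"
      by (simp add: X_def Y_def)
  qed
  finally show ?thesis by (simp add: c_def)
qed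

end


theorem corollary3:
  fixes p :: nat and v :: "'a::field_char_0 \<Rightarrow> real" and q :: 'a and n :: nat
  assumes "prime p" and "odd p"
    and "cp_like_abs p v"
    and "v (1 - q) < real p powr (- 1 / (real p - 1))"
  shows "\<exists>L. (\<lambda>N. v ((\<Sum>x<p ^ N. (- 1) ^ x * q_int q x ^ n) - L)) \<longlonglongrightarrow> 0
             \<and> v L \<le> 1"
proof -
  note cp = assms(3)[unfolded cp_like_abs_def]
  interpret uabs v using cp by unfold_locales auto
  have vp: "v (of_nat p) = 1 / real p" using cp by simp
  have compl: "\<And>S :: nat \<Rightarrow> 'a. (\<forall>e>0. \<exists>M. \<forall>m\<ge>M. \<forall>n\<ge>M. v (S m - S n) < e)
         \<Longrightarrow> (\<exists>L. (\<lambda>n. v (S n - L)) \<longlonglongrightarrow> 0)" using cp by blast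
  have p1: "p > 1" using assms(1) prime_gt_1_nat by auto
  define s where "s = v (q - 1)"
  have "v (1 - q) = s" unfolding s_def by (metis minus_diff_eq vminus)
  moreover have "real p powr (- 1 / (real p - 1)) \<le> real p powr 0"
    using p1 by (intro powr_mono) auto
  ultimately have s1: "s < 1" using assms(4) p1 by simp
  have s0: "0 \<le> s" by (simp add: s_def nn)
  define c where "c = max (1 / real p) (s ^ (p - 1))"
  have c0: "0 \<le> c" by (simp add: c_def le_max_iff_disj)
  have "s ^ (p - 1) < 1" using s0 s1 p1 by (simp add: power_less_one_iff)
  hence c1: "c < 1" using p1 by (simp add: c_def)
  define S where "S = (\<lambda>N. (\<Sum>x<p ^ N. (- 1) ^ x * q_int q x ^ n))"
  have vq: "v q \<le> 1" using q_le s1 by (simp add: s_def)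
  have step: "v (S (Suc N) - S N) \<le> c ^ N" for N
    unfolding c_def by (rule diff_step[OF assms(1,2) vp _ _ S_def]) (use s1 in \<open>auto simp: s_def\<close>)
  have bnd: "v (S N) \<le> 1" for N
    unfolding S_def using q_int_le[OF vq] nn
    by (intro vsum_le) (auto simp: mult neg1 vpow power_le_one)
  have cau: "v (S m - S k) \<le> c ^ k" if "k \<le> m" for m k
    using that
  proof (induction m rule: dec_induct)
    case base thus ?case by (simp add: vzero c0)
  next
    case (step m)
    have "v (S (Suc m) - S k) = v ((S (Suc m) - S m) + (S m - S k))" by simp
    also have "\<dots> \<le> max (v (S (Suc m) - S m)) (v (S m - S k))" by (rule ultra)
    also have "\<dots> \<le> c ^ k"
      using step.IH \<open>v (S (Suc m) - S m) \<le> c ^ m\<close> power_decreasing[OF step.hyps(1) c0] c1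
      by auto
    finally show ?case .
  qed
  have "\<exists>L. (\<lambda>n. v (S n - L)) \<longlonglongrightarrow> 0"
  proof (rule compl, intro allI impI)
    fix e :: real assume e: "e > 0"
    obtain K where K: "c ^ K < e" using real_arch_pow_inv[OF e c1] by blast
    have "\<forall>m\<ge>K. \<forall>k\<ge>K. v (S m - S k) < e"
    proof (intro allI impI)
      fix m k assume mk: "K \<le> m" "K \<le> k"
      show "v (S m - S k) < e"
      proof (cases "k \<le> m")
        case True
        thus ?thesis using cau[OF True] power_decreasing[OF mk(2) c0] c1 K by auto
      next
        case False
        hence "v (S k - S m) \<le> c ^ m" using cau by simp
        moreover have "v (S m - S k) = v (S k - S m)" by (metis minus_diff_eq vminus)
        ultimately show ?thesis using power_decreasing[OF mk(1) c0] c1 K by auto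
      qed
    qed
    thus "\<exists>M. \<forall>m\<ge>M. \<forall>n\<ge>M. v (S m - S n) < e" by blast
  qed
  then obtain L where L: "(\<lambda>n. v (S n - L)) \<longlonglongrightarrow> 0" by blast
  have "\<forall>\<^sub>F N in sequentially. v (S N - L) < 1"
    using order_tendstoD(2)[OF L] by simp
  then obtain N where N: "v (S N - L) < 1" by (meson eventually_sequentially order_refl)
  have "v L = v (S N - (S N - L))" by simp
  also have "\<dots> \<le> max (v (S N)) (v (S N - L))" by (rule vdiff)
  also have "\<dots> \<le> 1" using bnd[of N] N by simp
  finally have "v L \<le> 1" .
  with L show ?thesis unfolding S_def by blast
qed

end
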